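(* Let $R$ and $S$ be commutative rings with identity, $f:R\to S$ a ring homomorphism, and $J$ a nonzero proper ideal of $S$ with $J\subseteq\operatorname{Nil}(S)$. Then $R\bowtie^f J$ is properly zipped if and only if $R$ is properly zipped. In particular, for any $R$-module $M$, the trivial extension $R\ltimes M$ is properly zipped if and only if $R$ is properly zipped.
   Context: $R\bowtie^f J:=\{(r,f(r)+j)\mid r\in R,\ j\in J\}$, a subring of $R\times S$. $\operatorname{Nil}(S)$ is the nilradical of $S$. The trivial extension $R\ltimes M$ is the ring $R\oplus M$ with multiplication $(r,m)(r',m')=(rr',rm'+r'm)$. A commutative ring $A$ is properly zipped if whenever a prime ideal $\mathfrak{p}$ of $A$ contains the intersection of a family $\{\mathfrak{p}_i\}_i$ of prime ideals of $A$, then $\mathfrak{p}_i\subseteq\mathfrak{p}$ for some $i$. *)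

theory Defs
  imports "HOL-Algebra.Chinese_Remainder" "HOL-Algebra.Module"
begin

definition nilradical :: "('a, 'm) ring_scheme \<Rightarrow> 'a set" where
  "nilradical S = {a \<in> carrier S. \<exists>n::nat. a [^]\<^bsub>S\<^esub> n = \<zero>\<^bsub>S\<^esub>}"

definition amalgamation ::
  "('a, 'm) ring_scheme \<Rightarrow> ('b, 'n) ring_scheme \<Rightarrow> ('a \<Rightarrow> 'b) \<Rightarrow> 'b set \<Rightarrow> ('a \<times> 'b) ring" where
  "amalgamation R S f J = (RDirProd R S)
     \<lparr>carrier := {(r, f r \<oplus>\<^bsub>S\<^esub> j) | r j. r \<in> carrier R \<and> j \<in> J}\<rparr>"

definition trivial_extension ::
  "('a, 'm) ring_scheme \<Rightarrow> ('a, 'b) module \<Rightarrow> ('a \<times> 'b) ring" where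
  "trivial_extension R M =
     \<lparr>carrier = carrier R \<times> carrier M,
      mult = (\<lambda>(r, m) (r', m'). (r \<otimes>\<^bsub>R\<^esub> r', (r \<odot>\<^bsub>M\<^esub> m') \<oplus>\<^bsub>M\<^esub> (r' \<odot>\<^bsub>M\<^esub> m))),
      one = (\<one>\<^bsub>R\<^esub>, \<zero>\<^bsub>M\<^esub>),
      zero = (\<zero>\<^bsub>R\<^esub>, \<zero>\<^bsub>M\<^esub>),
      add = (\<lambda>(r, m) (r', m'). (r \<oplus>\<^bsub>R\<^esub> r', m \<oplus>\<^bsub>M\<^esub> m'))\<rparr>"

text \<open>A family is given
  as a set P of prime ideals; the intersection is taken inside the carrier.\<close>
definition properly_zipped :: "('a, 'm) ring_scheme \<Rightarrow> bool" where
  "properly_zipped A \<longleftrightarrow>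
     (\<forall>p P. primeideal p A \<longrightarrow> (\<forall>q\<in>P. primeideal q A) \<longrightarrow>
        carrier A \<inter> \<Inter>P \<subseteq> p \<longrightarrow> (\<exists>q\<in>P. q \<subseteq> p))"

end

theory Submission
  imports "HOL-Algebra.Subrings" Defs
begin

lemma prime_pow_mem:
  assumes "primeideal p A" "x \<in> carrier A" "x [^]\<^bsub>A\<^esub> (n::nat) \<in> p"
  shows "x \<in> p"
  using assms(3)
proof (induction n)
  case 0
  interpret primeideal p A by fact
  from 0 have "\<one>\<^bsub>A\<^esub> \<in> p" by simp
  then have "p = carrier A" by (rule one_imp_carrier)
  then show ?case using I_notcarr by simp
next
  case (Suc n)
  interpret primeideal p A by fact
  from Suc.prems have "x [^]\<^bsub>A\<^esub> n \<otimes>\<^bsub>A\<^esub> x \<in> p" by simp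
  then have "x [^]\<^bsub>A\<^esub> n \<in> p \<or> x \<in> p" using I_prime assms(2) by simp
  then show ?case using Suc.IH by blast
qed

locale nil_surj = ring_hom_cring A R \<phi> for A (structure) and R and \<phi> +
  assumes surj: "\<phi> ` carrier A = carrier R"
    and nil: "\<And>x. x \<in> carrier A \<Longrightarrow> \<phi> x = \<zero>\<^bsub>R\<^esub> \<Longrightarrow> \<exists>n::nat. x [^] n = \<zero>"
begin

lemma key:
  assumes p: "primeideal p A" and x: "x \<in> carrier A" and z: "z \<in> p" and e: "\<phi> x = \<phi> z"
  shows "x \<in> p"
proof -
  interpret P: primeideal p A by fact
  have zc: "z \<in> carrier A" using z P.a_subset by blast
  have "\<phi> (x \<ominus> z) = \<zero>\<^bsub>R\<^esub>" using x zc e by (simp add: a_minus_def S.r_neg)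
  then obtain n where "(x \<ominus> z) [^] (n::nat) = \<zero>" using nil x zc by blast
  then have "(x \<ominus> z) [^] n \<in> p" by simp
  then have "x \<ominus> z \<in> p" using prime_pow_mem[OF p] x zc by blast
  then have "(x \<ominus> z) \<oplus> z \<in> p" using z by simp
  moreover have "(x \<ominus> z) \<oplus> z = x" using x zc by (simp add: a_minus_def R.a_assoc R.l_neg)
  ultimately show ?thesis by simp
qed

lemma img_prime:
  assumes p: "primeideal p A"
  shows "primeideal (\<phi> ` p) R"
proof -
  interpret P: primeideal p A by fact
  have sub: "p \<subseteq> carrier A" by (rule P.a_subset)
  have "ideal (\<phi> ` p) R"
  proof (rule idealI)
    show "ring R" by (rule S.ring_axioms)
    show "subgroup (\<phi> ` p) (add_monoid R)"
    proof (rule group.subgroupI)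
      show "group (add_monoid R)" by (rule S.a_group)
      show "\<phi> ` p \<subseteq> carrier (add_monoid R)" using sub by auto
      show "\<phi> ` p \<noteq> {}" using P.zero_closed by blast
      fix a b assume "a \<in> \<phi> ` p" "b \<in> \<phi> ` p"
      then obtain x y where xy: "x \<in> p" "y \<in> p" "a = \<phi> x" "b = \<phi> y" by blast
      have xc: "x \<in> carrier A" using xy sub by blast
      have "inv\<^bsub>add_monoid R\<^esub> a = \<ominus>\<^bsub>R\<^esub> \<phi> x" using xy by (simp add: a_inv_def)
      also have "\<dots> = \<phi> (\<ominus> x)" using hom_a_inv[OF xc] by simp
      finally have "inv\<^bsub>add_monoid R\<^esub> a = \<phi> (\<ominus> x)" .
      then show "inv\<^bsub>add_monoid R\<^esub> a \<in> \<phi> ` p" using P.a_inv_closed[OF xy(1)] by (rule image_eqI)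
      have "a \<otimes>\<^bsub>add_monoid R\<^esub> b = \<phi> (x \<oplus> y)" using xy sub by auto
      then show "a \<otimes>\<^bsub>add_monoid R\<^esub> b \<in> \<phi> ` p" using P.a_closed[OF xy(1,2)] by (rule image_eqI)
    qed
    fix a x assume a: "a \<in> \<phi> ` p" and x: "x \<in> carrier R"
    then obtain z y where zy: "z \<in> p" "a = \<phi> z" "y \<in> carrier A" "x = \<phi> y" using surj by blast
    have "x \<otimes>\<^bsub>R\<^esub> a = \<phi> (y \<otimes> z)" using zy sub by auto
    then show "x \<otimes>\<^bsub>R\<^esub> a \<in> \<phi> ` p" using P.I_l_closed[OF zy(1,3)] by (rule image_eqI)
    have "a \<otimes>\<^bsub>R\<^esub> x = \<phi> (z \<otimes> y)" using zy sub by auto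
    then show "a \<otimes>\<^bsub>R\<^esub> x \<in> \<phi> ` p" using P.I_r_closed[OF zy(1,3)] by (rule image_eqI)
  qed
  moreover have NC: "carrier R \<noteq> \<phi> ` p"
  proof
    assume "carrier R = \<phi> ` p"
    then have "\<one>\<^bsub>R\<^esub> \<in> \<phi> ` p" using S.one_closed by simp
    then obtain z where z: "z \<in> p" "\<one>\<^bsub>R\<^esub> = \<phi> z" by blast
    have "\<phi> \<one> = \<phi> z" using z(2) by simp
    then have "\<one> \<in> p" using key[OF p R.one_closed z(1)] by blast
    then have "p = carrier A" by (rule P.one_imp_carrier)
    then show False using P.I_notcarr by simp
  qed
  moreover have PR: "a \<in> \<phi> ` p \<or> b \<in> \<phi> ` p"
    if ab: "a \<in> carrier R" "b \<in> carrier R" "a \<otimes>\<^bsub>R\<^esub> b \<in> \<phi> ` p" for a b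
  proof -
    have "a \<in> \<phi> ` carrier A" "b \<in> \<phi> ` carrier A" using ab(1,2) surj by simp_all
    then obtain x y where xy: "x \<in> carrier A" "y \<in> carrier A" "a = \<phi> x" "b = \<phi> y"
      by blast
    obtain z where z: "z \<in> p" "a \<otimes>\<^bsub>R\<^esub> b = \<phi> z" using ab(3) by blast
    have "\<phi> (x \<otimes> y) = \<phi> z" using xy z by simp
    then have "x \<otimes> y \<in> p" using key[OF p _ z(1)] xy by blast
    then have "x \<in> p \<or> y \<in> p" using P.I_prime xy by blast
    then show ?thesis using xy by blast
  qed
  ultimately show ?thesis by (intro primeidealI[OF _ S.is_cring]) blast+
qed

lemma pz_iff: "properly_zipped A \<longleftrightarrow> properly_zipped R"
proof
  assume pzA: "properly_zipped A"
  show "properly_zipped R" unfolding properly_zipped_def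
  proof (intro allI impI)
    fix p P
    assume p: "primeideal p R" and P: "\<forall>q\<in>P. primeideal q R" and inc: "carrier R \<inter> \<Inter>P \<subseteq> p"
    define pre where "pre = (\<lambda>q. {r \<in> carrier A. \<phi> r \<in> q})"
    have prep: "primeideal (pre q) A" if "primeideal q R" for q
      unfolding pre_def by (rule ring.primeideal_vimage[OF R.is_cring that])
    have "\<exists>q\<in>pre ` P. q \<subseteq> pre p"
      using pzA unfolding properly_zipped_def
    proof (elim allE impE)
      show "primeideal (pre p) A" by (rule prep[OF p])
      show "\<forall>q\<in>pre ` P. primeideal q A" using P prep by blast
      show "carrier A \<inter> \<Inter> (pre ` P) \<subseteq> pre p"
        using inc by (auto simp: pre_def)
    qed
    then obtain q where q: "q \<in> P" "pre q \<subseteq> pre p" by blast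
    have "q \<subseteq> p"
    proof
      fix y assume y: "y \<in> q"
      have "q \<subseteq> carrier R" using P q(1) by (simp add: primeideal_def ideal_def additive_subgroup.a_subset)
      then obtain x where "x \<in> carrier A" "y = \<phi> x" using y surj by blast
      then show "y \<in> p" using q(2) y by (auto simp: pre_def)
    qed
    then show "\<exists>q\<in>P. q \<subseteq> p" using q by blast
  qed
next
  assume pzR: "properly_zipped R"
  show "properly_zipped A" unfolding properly_zipped_def
  proof (intro allI impI)
    fix p P
    assume p: "primeideal p A" and P: "\<forall>q\<in>P. primeideal q A" and inc: "carrier A \<inter> \<Inter>P \<subseteq> p"
    have "\<exists>q\<in>(\<lambda>q. \<phi> ` q) ` P. q \<subseteq> \<phi> ` p"
      using pzR unfolding properly_zipped_def
    proof (elim allE impE)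
      show "primeideal (\<phi> ` p) R" by (rule img_prime[OF p])
      show "\<forall>q\<in>(\<lambda>q. \<phi> ` q) ` P. primeideal q R" using P img_prime by blast
      show "carrier R \<inter> \<Inter> ((\<lambda>q. \<phi> ` q) ` P) \<subseteq> \<phi> ` p"
      proof
        fix y assume y: "y \<in> carrier R \<inter> \<Inter> ((\<lambda>q. \<phi> ` q) ` P)"
        then obtain x where x: "x \<in> carrier A" "y = \<phi> x" using surj by blast
        have "x \<in> q" if "q \<in> P" for q
        proof -
          from y that x obtain z where "z \<in> q" "\<phi> x = \<phi> z" by blast
          then show ?thesis using key[of q x z] P that x by blast
        qed
        then have "x \<in> p" using inc x by blast
        then show "y \<in> \<phi> ` p" using x by blast
      qed
    qed
    then obtain q where q: "q \<in> P" "\<phi> ` q \<subseteq> \<phi> ` p" by blast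
    have "q \<subseteq> p"
    proof
      fix z assume z: "z \<in> q"
      have "q \<subseteq> carrier A" using P q(1) by (simp add: primeideal_def ideal_def additive_subgroup.a_subset)
      then have zc: "z \<in> carrier A" using z by blast
      obtain w where "w \<in> p" "\<phi> z = \<phi> w" using q(2) z by blast
      then show "z \<in> p" using key[OF p zc] by blast
    qed
    then show "\<exists>q\<in>P. q \<subseteq> p" using q by blast
  qed
qed

end


lemma RDP_simps:
  "carrier (RDirProd R S) = carrier R \<times> carrier S"
  "(a, b) \<otimes>\<^bsub>RDirProd R S\<^esub> (c, d) = (a \<otimes>\<^bsub>R\<^esub> c, b \<otimes>\<^bsub>S\<^esub> d)"
  "(a, b) \<oplus>\<^bsub>RDirProd R S\<^esub> (c, d) = (a \<oplus>\<^bsub>R\<^esub> c, b \<oplus>\<^bsub>S\<^esub> d)"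
  "\<one>\<^bsub>RDirProd R S\<^esub> = (\<one>\<^bsub>R\<^esub>, \<one>\<^bsub>S\<^esub>)"
  "\<zero>\<^bsub>RDirProd R S\<^esub> = (\<zero>\<^bsub>R\<^esub>, \<zero>\<^bsub>S\<^esub>)"
  by (simp_all add: RDirProd_def DirProd_def monoid.defs)

lemma RDP_inv:
  assumes "ring R" "ring S" "a \<in> carrier R" "b \<in> carrier S"
  shows "\<ominus>\<^bsub>RDirProd R S\<^esub> (a, b) = (\<ominus>\<^bsub>R\<^esub> a, \<ominus>\<^bsub>S\<^esub> b)"
proof -
  interpret T: ring "RDirProd R S" using RDirProd_ring assms(1,2) by blast
  interpret R: ring R by fact
  interpret S: ring S by fact
  show ?thesis
    by (rule T.minus_equality) (simp_all add: RDP_simps assms R.l_neg S.l_neg)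
qed

lemma amalg_pow:
  "(a, b) [^]\<^bsub>(RDirProd R S)\<lparr>carrier := H\<rparr>\<^esub> (n::nat) = (a [^]\<^bsub>R\<^esub> n, b [^]\<^bsub>S\<^esub> n)"
  by (induction n) (simp_all add: RDP_simps)

lemma amalg_case:
  assumes R: "cring R" and S: "cring S" and f: "f \<in> ring_hom R S" and J: "ideal J S"
    and nilJ: "J \<subseteq> nilradical S"
  shows "nil_surj (amalgamation R S f J) R fst"
proof -
  interpret R: cring R by fact
  interpret S: cring S by fact
  interpret J: ideal J S by fact
  interpret h: ring_hom_cring R S f using R S f by (simp add: ring_hom_cring_def ring_hom_cring_axioms_def)
  define T where "T = RDirProd R S"
  define H where "H = {(r, f r \<oplus>\<^bsub>S\<^esub> j) | r j. r \<in> carrier R \<and> j \<in> J}"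
  have Am: "amalgamation R S f J = T\<lparr>carrier := H\<rparr>"
    unfolding amalgamation_def T_def H_def by simp
  have Tr: "ring T" unfolding T_def using RDirProd_ring R.ring_axioms S.ring_axioms by blast
  interpret T: ring T by (rule Tr)
  have Jc: "j \<in> carrier S" if "j \<in> J" for j using that J.a_subset by blast
  have memH: "x \<in> H \<longleftrightarrow> (\<exists>r j. x = (r, f r \<oplus>\<^bsub>S\<^esub> j) \<and> r \<in> carrier R \<and> j \<in> J)" for x
    unfolding H_def by blast
  have HT: "H \<subseteq> carrier T" using Jc by (auto simp: memH T_def RDP_simps)
  have subr: "subring H T"
  proof (rule T.subringI)
    show "H \<subseteq> carrier T" by (rule HT)
    show "\<one>\<^bsub>T\<^esub> \<in> H" unfolding memH T_def RDP_simps
      by (rule exI[of _ "\<one>\<^bsub>R\<^esub>"], rule exI[of _ "\<zero>\<^bsub>S\<^esub>"]) simp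
    fix h1 h2 assume h1: "h1 \<in> H" and h2: "h2 \<in> H"
    then obtain r j r' j' where e: "h1 = (r, f r \<oplus>\<^bsub>S\<^esub> j)" "r \<in> carrier R" "j \<in> J"
      "h2 = (r', f r' \<oplus>\<^bsub>S\<^esub> j')" "r' \<in> carrier R" "j' \<in> J" unfolding memH by blast
    have jc: "j \<in> carrier S" "j' \<in> carrier S" using e Jc by auto
    have "\<ominus>\<^bsub>T\<^esub> h1 = (\<ominus>\<^bsub>R\<^esub> r, f (\<ominus>\<^bsub>R\<^esub> r) \<oplus>\<^bsub>S\<^esub> \<ominus>\<^bsub>S\<^esub> j)"
      unfolding T_def using e jc
      by (simp add: RDP_inv R.ring_axioms S.ring_axioms S.minus_add)
    then show "\<ominus>\<^bsub>T\<^esub> h1 \<in> H" unfolding memH using e by blast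
    have "h1 \<otimes>\<^bsub>T\<^esub> h2 = (r \<otimes>\<^bsub>R\<^esub> r', f (r \<otimes>\<^bsub>R\<^esub> r') \<oplus>\<^bsub>S\<^esub>
        (f r \<otimes>\<^bsub>S\<^esub> j' \<oplus>\<^bsub>S\<^esub> (j \<otimes>\<^bsub>S\<^esub> f r' \<oplus>\<^bsub>S\<^esub> j \<otimes>\<^bsub>S\<^esub> j')))"
    proof -
      have fc: "f r \<in> carrier S" "f r' \<in> carrier S" using e by simp_all
      have "(f r \<oplus>\<^bsub>S\<^esub> j) \<otimes>\<^bsub>S\<^esub> (f r' \<oplus>\<^bsub>S\<^esub> j') =
          f r \<otimes>\<^bsub>S\<^esub> (f r' \<oplus>\<^bsub>S\<^esub> j') \<oplus>\<^bsub>S\<^esub> j \<otimes>\<^bsub>S\<^esub> (f r' \<oplus>\<^bsub>S\<^esub> j')"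
        using fc jc by (simp only: S.l_distr S.a_closed)
      also have "\<dots> = (f r \<otimes>\<^bsub>S\<^esub> f r' \<oplus>\<^bsub>S\<^esub> f r \<otimes>\<^bsub>S\<^esub> j') \<oplus>\<^bsub>S\<^esub> (j \<otimes>\<^bsub>S\<^esub> f r' \<oplus>\<^bsub>S\<^esub> j \<otimes>\<^bsub>S\<^esub> j')"
        using fc jc by (simp only: S.r_distr)
      also have "\<dots> = f r \<otimes>\<^bsub>S\<^esub> f r' \<oplus>\<^bsub>S\<^esub> (f r \<otimes>\<^bsub>S\<^esub> j' \<oplus>\<^bsub>S\<^esub> (j \<otimes>\<^bsub>S\<^esub> f r' \<oplus>\<^bsub>S\<^esub> j \<otimes>\<^bsub>S\<^esub> j'))"
        using fc jc by (simp add: S.a_assoc)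
      finally show ?thesis unfolding T_def using e by (simp add: RDP_simps)
    qed
    moreover have "f r \<otimes>\<^bsub>S\<^esub> j' \<oplus>\<^bsub>S\<^esub> (j \<otimes>\<^bsub>S\<^esub> f r' \<oplus>\<^bsub>S\<^esub> j \<otimes>\<^bsub>S\<^esub> j') \<in> J"
      using e jc by (simp add: J.I_l_closed J.I_r_closed)
    ultimately show "h1 \<otimes>\<^bsub>T\<^esub> h2 \<in> H" unfolding memH using e by blast
    have "h1 \<oplus>\<^bsub>T\<^esub> h2 = (r \<oplus>\<^bsub>R\<^esub> r', f (r \<oplus>\<^bsub>R\<^esub> r') \<oplus>\<^bsub>S\<^esub> (j \<oplus>\<^bsub>S\<^esub> j'))"
      unfolding T_def using e jc
      by (simp add: RDP_simps S.a_ac)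
    then show "h1 \<oplus>\<^bsub>T\<^esub> h2 \<in> H" unfolding memH using e by blast
  qed
  have subc: "subcring H T"
  proof (rule T.subcringI[OF subr])
    fix h1 h2 assume "h1 \<in> H" "h2 \<in> H"
    then have "h1 \<in> carrier R \<times> carrier S" "h2 \<in> carrier R \<times> carrier S"
      using HT by (auto simp: T_def RDP_simps)
    then show "h1 \<otimes>\<^bsub>T\<^esub> h2 = h2 \<otimes>\<^bsub>T\<^esub> h1"
      by (auto simp: T_def RDP_simps R.m_comm S.m_comm)
  qed
  have cA: "cring (amalgamation R S f J)"
    unfolding Am using T.subcring_iff[OF HT] subc by simp
  have hom: "fst \<in> ring_hom (amalgamation R S f J) R"
    unfolding Am using HT
    by (auto simp: ring_hom_def T_def RDP_simps)
  show ?thesis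
  proof (unfold nil_surj_def nil_surj_axioms_def ring_hom_cring_def ring_hom_cring_axioms_def,
      intro conjI allI impI)
    show "cring (amalgamation R S f J)" by (rule cA)
    show "cring R" by (rule R.is_cring)
    show "fst \<in> ring_hom (amalgamation R S f J) R" by (rule hom)
    show "fst ` carrier (amalgamation R S f J) = carrier R"
    proof
      show "fst ` carrier (amalgamation R S f J) \<subseteq> carrier R"
        unfolding Am using HT by (auto simp: T_def RDP_simps)
      show "carrier R \<subseteq> fst ` carrier (amalgamation R S f J)"
      proof
        fix r assume r: "r \<in> carrier R"
        then have "(r, f r \<oplus>\<^bsub>S\<^esub> \<zero>\<^bsub>S\<^esub>) \<in> H" using J.zero_closed unfolding memH by blast
        then show "r \<in> fst ` carrier (amalgamation R S f J)" unfolding Am by force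
      qed
    qed
    fix x assume x: "x \<in> carrier (amalgamation R S f J)" and x0: "fst x = \<zero>\<^bsub>R\<^esub>"
    have "x \<in> H" using x unfolding Am by simp
    then obtain r j where e: "x = (r, f r \<oplus>\<^bsub>S\<^esub> j)" "r \<in> carrier R" "j \<in> J"
      unfolding memH by blast
    have jc: "j \<in> carrier S" using e Jc by auto
    have xe: "x = (\<zero>\<^bsub>R\<^esub>, j)" using e x0 jc by simp
    from e nilJ obtain n where n: "j [^]\<^bsub>S\<^esub> (n::nat) = \<zero>\<^bsub>S\<^esub>"
      unfolding nilradical_def by blast
    have "x [^]\<^bsub>amalgamation R S f J\<^esub> Suc n = \<zero>\<^bsub>amalgamation R S f J\<^esub>"
      unfolding Am xe T_def amalg_pow using n jc by (simp add: RDP_simps)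
    then show "\<exists>n::nat. x [^]\<^bsub>amalgamation R S f J\<^esub> n = \<zero>\<^bsub>amalgamation R S f J\<^esub>" by blast
  qed
qed


lemma te_simps:
  "carrier (trivial_extension R M) = carrier R \<times> carrier M"
  "(a, b) \<otimes>\<^bsub>trivial_extension R M\<^esub> (c, d) = (a \<otimes>\<^bsub>R\<^esub> c, (a \<odot>\<^bsub>M\<^esub> d) \<oplus>\<^bsub>M\<^esub> (c \<odot>\<^bsub>M\<^esub> b))"
  "(a, b) \<oplus>\<^bsub>trivial_extension R M\<^esub> (c, d) = (a \<oplus>\<^bsub>R\<^esub> c, b \<oplus>\<^bsub>M\<^esub> d)"
  "\<one>\<^bsub>trivial_extension R M\<^esub> = (\<one>\<^bsub>R\<^esub>, \<zero>\<^bsub>M\<^esub>)"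
  "\<zero>\<^bsub>trivial_extension R M\<^esub> = (\<zero>\<^bsub>R\<^esub>, \<zero>\<^bsub>M\<^esub>)"
  by (simp_all add: trivial_extension_def)

lemma te_case:
  assumes M: "module R M"
  shows "nil_surj (trivial_extension R M) R fst"
proof -
  interpret M: module R M by fact
  let ?E = "trivial_extension R M"
  have ag: "abelian_group ?E"
  proof (rule abelian_groupI)
    fix x y z assume x: "x \<in> carrier ?E" and y: "y \<in> carrier ?E" and z: "z \<in> carrier ?E"
    obtain a b c d e g where e: "x = (a, b)" "y = (c, d)" "z = (e, g)" by (cases x, cases y, cases z) blast
    show "x \<oplus>\<^bsub>?E\<^esub> y \<in> carrier ?E" using x y e by (simp add: te_simps)
    show "x \<oplus>\<^bsub>?E\<^esub> y \<oplus>\<^bsub>?E\<^esub> z = x \<oplus>\<^bsub>?E\<^esub> (y \<oplus>\<^bsub>?E\<^esub> z)"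
      using x y z e by (simp add: te_simps M.R.a_assoc M.M.a_assoc)
    show "x \<oplus>\<^bsub>?E\<^esub> y = y \<oplus>\<^bsub>?E\<^esub> x"
      using x y e by (simp add: te_simps M.R.a_comm M.M.a_comm)
    show "\<zero>\<^bsub>?E\<^esub> \<oplus>\<^bsub>?E\<^esub> x = x" using x e by (simp add: te_simps)
    have "(\<ominus>\<^bsub>R\<^esub> a, \<ominus>\<^bsub>M\<^esub> b) \<in> carrier ?E \<and> (\<ominus>\<^bsub>R\<^esub> a, \<ominus>\<^bsub>M\<^esub> b) \<oplus>\<^bsub>?E\<^esub> x = \<zero>\<^bsub>?E\<^esub>"
      using x e by (simp add: te_simps M.R.l_neg M.M.l_neg)
    then show "\<exists>y\<in>carrier ?E. y \<oplus>\<^bsub>?E\<^esub> x = \<zero>\<^bsub>?E\<^esub>" by blast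
  next
    show "\<zero>\<^bsub>?E\<^esub> \<in> carrier ?E" by (simp add: te_simps)
  qed
  have cm: "comm_monoid ?E"
  proof (rule comm_monoidI)
    fix x y z assume x: "x \<in> carrier ?E" and y: "y \<in> carrier ?E" and z: "z \<in> carrier ?E"
    obtain a b c d e g where e: "x = (a, b)" "y = (c, d)" "z = (e, g)" by (cases x, cases y, cases z) blast
    have ab: "a \<in> carrier R" "b \<in> carrier M" "c \<in> carrier R" "d \<in> carrier M" "e \<in> carrier R" "g \<in> carrier M"
      using x y z e by (simp_all add: te_simps)
    show "x \<otimes>\<^bsub>?E\<^esub> y \<in> carrier ?E" using ab e by (simp add: te_simps)
    show "x \<otimes>\<^bsub>?E\<^esub> y = y \<otimes>\<^bsub>?E\<^esub> x"
      using ab e by (simp add: te_simps M.R.m_comm M.M.a_comm)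
    show "\<one>\<^bsub>?E\<^esub> \<otimes>\<^bsub>?E\<^esub> x = x" using ab e by (simp add: te_simps)
    have "(a \<otimes>\<^bsub>R\<^esub> c) \<odot>\<^bsub>M\<^esub> g \<oplus>\<^bsub>M\<^esub> e \<odot>\<^bsub>M\<^esub> (a \<odot>\<^bsub>M\<^esub> d \<oplus>\<^bsub>M\<^esub> c \<odot>\<^bsub>M\<^esub> b)
        = a \<odot>\<^bsub>M\<^esub> (c \<odot>\<^bsub>M\<^esub> g \<oplus>\<^bsub>M\<^esub> e \<odot>\<^bsub>M\<^esub> d) \<oplus>\<^bsub>M\<^esub> (c \<otimes>\<^bsub>R\<^esub> e) \<odot>\<^bsub>M\<^esub> b"
    proof -
      have "e \<odot>\<^bsub>M\<^esub> (a \<odot>\<^bsub>M\<^esub> d) = a \<odot>\<^bsub>M\<^esub> (e \<odot>\<^bsub>M\<^esub> d)"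
        using ab by (simp add: M.smult_assoc1[symmetric] M.R.m_comm)
      moreover have "e \<odot>\<^bsub>M\<^esub> (c \<odot>\<^bsub>M\<^esub> b) = (c \<otimes>\<^bsub>R\<^esub> e) \<odot>\<^bsub>M\<^esub> b"
        using ab M.smult_assoc1[of e c b] M.R.m_comm[of c e] by simp
      moreover have "(a \<otimes>\<^bsub>R\<^esub> c) \<odot>\<^bsub>M\<^esub> g = a \<odot>\<^bsub>M\<^esub> (c \<odot>\<^bsub>M\<^esub> g)"
        using ab by (simp add: M.smult_assoc1)
      ultimately show ?thesis using ab by (simp add: M.smult_r_distr M.M.a_assoc)
    qed
    then show "x \<otimes>\<^bsub>?E\<^esub> y \<otimes>\<^bsub>?E\<^esub> z = x \<otimes>\<^bsub>?E\<^esub> (y \<otimes>\<^bsub>?E\<^esub> z)"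
      using ab e by (simp add: te_simps M.R.m_assoc)
  next
    show "\<one>\<^bsub>?E\<^esub> \<in> carrier ?E" by (simp add: te_simps)
  qed
  have cE: "cring ?E"
  proof (rule cringI[OF ag cm])
    fix x y z assume x: "x \<in> carrier ?E" and y: "y \<in> carrier ?E" and z: "z \<in> carrier ?E"
    obtain a b c d e g where e: "x = (a, b)" "y = (c, d)" "z = (e, g)" by (cases x, cases y, cases z) blast
    have ab: "a \<in> carrier R" "b \<in> carrier M" "c \<in> carrier R" "d \<in> carrier M" "e \<in> carrier R" "g \<in> carrier M"
      using x y z e by (simp_all add: te_simps)
    have "(a \<oplus>\<^bsub>R\<^esub> c) \<odot>\<^bsub>M\<^esub> g \<oplus>\<^bsub>M\<^esub> e \<odot>\<^bsub>M\<^esub> (b \<oplus>\<^bsub>M\<^esub> d)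
      = (a \<odot>\<^bsub>M\<^esub> g \<oplus>\<^bsub>M\<^esub> e \<odot>\<^bsub>M\<^esub> b) \<oplus>\<^bsub>M\<^esub> (c \<odot>\<^bsub>M\<^esub> g \<oplus>\<^bsub>M\<^esub> e \<odot>\<^bsub>M\<^esub> d)"
      using ab by (simp add: M.smult_l_distr M.smult_r_distr M.M.a_ac)
    then show "(x \<oplus>\<^bsub>?E\<^esub> y) \<otimes>\<^bsub>?E\<^esub> z = x \<otimes>\<^bsub>?E\<^esub> z \<oplus>\<^bsub>?E\<^esub> y \<otimes>\<^bsub>?E\<^esub> z"
      using ab e by (simp add: te_simps M.R.l_distr)
  qed
  show ?thesis
  proof (unfold nil_surj_def nil_surj_axioms_def ring_hom_cring_def ring_hom_cring_axioms_def,
      intro conjI allI impI)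
    show "cring ?E" by (rule cE)
    show "cring R" by (rule M.R.is_cring)
    show "fst \<in> ring_hom ?E R"
      by (auto simp: ring_hom_def te_simps)
    show "fst ` carrier ?E = carrier R"
    proof
      show "fst ` carrier ?E \<subseteq> carrier R" by (auto simp: te_simps)
      show "carrier R \<subseteq> fst ` carrier ?E"
      proof
        fix r assume r: "r \<in> carrier R"
        then have "(r, \<zero>\<^bsub>M\<^esub>) \<in> carrier ?E" by (simp add: te_simps)
        then show "r \<in> fst ` carrier ?E" by force
      qed
    qed
    fix x assume x: "x \<in> carrier ?E" and x0: "fst x = \<zero>\<^bsub>R\<^esub>"
    obtain a b where e: "x = (a, b)" by (cases x) blast
    have ab: "a = \<zero>\<^bsub>R\<^esub>" "b \<in> carrier M" using x x0 e by (simp_all add: te_simps)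
    have "x [^]\<^bsub>?E\<^esub> Suc (Suc 0) = \<zero>\<^bsub>?E\<^esub>"
      using ab e by (simp add: te_simps)
    then show "\<exists>n::nat. x [^]\<^bsub>?E\<^esub> n = \<zero>\<^bsub>?E\<^esub>" by blast
  qed
qed

theorem corollary4p9:
  fixes R :: "('a, 'm) ring_scheme"
  assumes "cring R"
  shows "(\<forall>(S :: ('b, 'n) ring_scheme) (f :: 'a \<Rightarrow> 'b) (J :: 'b set).
            cring S \<and> f \<in> ring_hom R S \<and> ideal J S \<and> J \<noteq> {\<zero>\<^bsub>S\<^esub>} \<and> J \<noteq> carrier S
            \<and> J \<subseteq> nilradical S \<longrightarrow>
            (properly_zipped (amalgamation R S f J) \<longleftrightarrow> properly_zipped R))
    \<and> (\<forall>M :: ('a, 'c) module. module R M \<longrightarrow>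
         (properly_zipped (trivial_extension R M) \<longleftrightarrow> properly_zipped R))"
proof (intro conjI allI impI)
  fix S :: "('b, 'n) ring_scheme" and f :: "'a \<Rightarrow> 'b" and J :: "'b set"
  assume h: "cring S \<and> f \<in> ring_hom R S \<and> ideal J S \<and> J \<noteq> {\<zero>\<^bsub>S\<^esub>} \<and> J \<noteq> carrier S
            \<and> J \<subseteq> nilradical S"
  show "properly_zipped (amalgamation R S f J) \<longleftrightarrow> properly_zipped R"
    using nil_surj.pz_iff[OF amalg_case[OF assms]] h by blast
next
  fix M :: "('a, 'c) module"
  assume "module R M"
  then show "properly_zipped (trivial_extension R M) \<longleftrightarrow> properly_zipped R"
    using nil_surj.pz_iff[OF te_case] by blast
qed

end
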